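(* For $w\in[0,1]$, $\delta\in\{0,1\}$ and $p\in(0,1)$, let $l(w,\delta,p)=(1-wp)^{1-\delta}$ and $\tilde l(w,\delta,p)=(1-p)^{w(1-\delta)}$, and let $d(w,\delta,p)=|l(w,\delta,p)-\tilde l(w,\delta,p)|$. Then for all such $w,\delta,p$, \[ d(w,\delta,p)\le (1-\beta p)-(1-p)^{\beta},\qquad\text{where } \beta=\frac{\log\{-p/\log(1-p)\}}{\log(1-p)}. \] In particular, for any $p\in(0,0.4]$ and all $w\in[0,1]$, $\delta\in\{0,1\}$, one has $d(w,\delta,p)<0.0255$.
   Context: This arises in a dose-finding likelihood: $p$ is the toxicity probability at a dose, $\delta$ indicates whether a patient's binary toxicity outcome has been ascertained ($\delta=1$) or is still pending ($\delta=0$), and $w$ is a weight in $[0,1]$ equal to the probability that a patient who will eventually experience toxicity has already experienced it by the current follow-up time. The factor $(1-wp)^{1-\delta}$ is the exact likelihood contribution of a pending patient and $(1-p)^{w(1-\delta)}$ is its approximation. *)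

theory Defs
  imports Complex_Main
begin

definition lik :: "real \<Rightarrow> real \<Rightarrow> real \<Rightarrow> real" where
  "lik w \<delta> p = (1 - w * p) powr (1 - \<delta>)"

definition lik_approx :: "real \<Rightarrow> real \<Rightarrow> real \<Rightarrow> real" where
  "lik_approx w \<delta> p = (1 - p) powr (w * (1 - \<delta>))"

definition lik_dist :: "real \<Rightarrow> real \<Rightarrow> real \<Rightarrow> real" where
  "lik_dist w \<delta> p = \<bar>lik w \<delta> p - lik_approx w \<delta> p\<bar>"

definition beta_star :: "real \<Rightarrow> real" where
  "beta_star p = ln (- p / ln (1 - p)) / ln (1 - p)"

end

theory Submission
  imports Defs "HOL-Analysis.Analysis"
begin

lemma exp_lb: fixes x::real shows "1 + x + x^2/2 + x^3/6 + x^4/24 + x^5/120 + x^6/720 + x^7/5040 \<le> exp x"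
proof -
  obtain t where "exp x = (\<Sum>m<8. x^m / fact m) + exp t / fact 8 * x^8"
    using Maclaurin_exp_le[of x 8] by blast
  moreover have "exp t / fact 8 * x^8 \<ge> 0" by (simp add: zero_le_even_power)
  moreover have "(\<Sum>m<8. x^m / fact m) = 1 + x + x^2/2 + x^3/6 + x^4/24 + x^5/120 + x^6/720 + x^7/5040"
    by (simp add: eval_nat_numeral fact_numeral)
  ultimately show ?thesis by linarith
qed

lemma ln06: "ln (0.6::real) \<ge> -0.51084"
proof -
  have n: "(5/3::real) \<le> 1 + 0.51084 + 0.51084^2/2 + 0.51084^3/6 + 0.51084^4/24 + 0.51084^5/120 + 0.51084^6/720 + 0.51084^7/5040"
    by (simp add: power_numeral_reduce)
  have "exp (0.51084::real) \<ge> 5/3" using exp_lb[of "0.51084"] n by linarith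
  hence "exp (0.51084::real) * 0.6 \<ge> 1" by linarith
  hence "exp (-0.51084::real) \<le> 0.6"
    by (metis exp_minus exp_gt_zero divide_le_eq inverse_eq_divide mult.commute)
  hence "ln (exp (-0.51084::real)) \<le> ln 0.6" by (rule ln_mono) simp
  thus ?thesis by simp
qed

lemma lnr: "ln (0.783::real) \<le> -0.2446"
proof -
  have n: "(0.783::real) \<le> 1 + (-0.2446) + (-0.2446)^2/2 + (-0.2446)^3/6 + (-0.2446)^4/24 + (-0.2446)^5/120 + (-0.2446)^6/720 + (-0.2446)^7/5040"
    by (simp add: power_numeral_reduce)
  have "exp (-0.2446::real) \<ge> 0.783" using exp_lb[of "-0.2446"] n by linarith
  hence "ln 0.783 \<le> ln (exp (-0.2446::real))" by (rule ln_mono) simp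
  thus ?thesis by simp
qed

lemma concave_pow: fixes x w :: real assumes "0 < x" "0 \<le> w" "w \<le> 1"
  shows "x powr w \<le> 1 + w * (x - 1)"
  using Youngs_inequality_0[of w "1 - w" x 1] assms by (simp add: algebra_simps)

lemma tangent_exp: fixes x a :: real shows "exp a * (1 + (x - a)) \<le> exp x"
proof -
  have "exp a * (1 + (x - a)) \<le> exp a * exp (x - a)"
    by (rule mult_left_mono) auto
  thus ?thesis by (simp add: exp_diff)
qed

lemma main0:
  fixes w p :: real
  assumes "0 \<le> w" "w \<le> 1" "0 < p" "p < 1"
  shows "lik_dist w 0 p = 1 - w * p - (1 - p) powr w"
    and "lik_dist w 0 p \<le> (1 - beta_star p * p) - (1 - p) powr (beta_star p)"
    and "p \<le> 0.4 \<Longrightarrow> lik_dist w 0 p < 0.0255"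
proof -
  define q where "q = 1 - p"
  have q0: "0 < q" "q < 1" using assms by (auto simp: q_def)
  have b: "0 < 1 - w * p" using assms
    by (smt (verit) mult_left_le_one_le mult_nonneg_nonneg)
  have up: "q powr w \<le> 1 - w * p" using concave_pow[OF q0(1) assms(1,2)] by (simp add: q_def algebra_simps)
  show eq: "lik_dist w 0 p = 1 - w * p - (1 - p) powr w"
    using up b unfolding lik_dist_def lik_def lik_approx_def q_def by simp
  define L where "L = ln q"
  have L0: "L < 0" using q0 by (simp add: L_def)
  define B where "B = beta_star p"
  have B: "B = ln (- p / L) / L" by (simp add: B_def beta_star_def L_def q_def)
  have pos: "- p / L > 0" using L0 assms by (simp add: divide_pos_neg)
  have qB: "q powr B = - p / L"
    using q0 pos by (simp add: powr_def B L_def)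
  have qw: "q powr w = exp (w * L)" using q0 by (simp add: powr_def L_def mult.commute)
  have "exp (B * L) * (1 + (w * L - B * L)) \<le> exp (w * L)" by (rule tangent_exp)
  moreover have "exp (B * L) = - p / L" using qB q0 by (simp add: powr_def L_def mult.commute)
  ultimately have "(- p / L) * (1 + (w * L - B * L)) \<le> q powr w" using qw by simp
  hence "- p / L - p * w + p * B \<le> q powr w" using L0 by (simp add: field_simps)
  thus "lik_dist w 0 p \<le> (1 - beta_star p * p) - (1 - p) powr (beta_star p)"
    using eq qB by (simp add: q_def B_def algebra_simps)
  assume p4: "p \<le> 0.4"
  (* monotonicity in p *)
  have c: "(0.6 / q) powr w \<le> 1 + w * (0.6 / q - 1)"
    using concave_pow[of "0.6/q" w] q0 assms by simp
  have "(0.6::real) powr w = q powr w * (0.6 / q) powr w"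
    using q0 by (simp add: powr_mult[symmetric])
  also have "\<dots> \<le> q powr w * (1 + w * (0.6 / q - 1))"
    using c by (simp add: mult_left_mono)
  also have "\<dots> = q powr w + w * (0.6 - q) * (q powr w / q)"
    using q0 by (simp add: field_simps)
  also have "\<dots> \<le> q powr w + w * (0.6 - q)"
  proof -
    have "q powr 1 \<le> q powr w" using q0 assms powr_mono'[of w 1 q] by simp
    hence "1 \<le> q powr w / q" using q0 by simp
    moreover have "w * (0.6 - q) \<le> 0" using assms p4 by (simp add: q_def mult_nonneg_nonpos)
    ultimately have "w * (0.6 - q) * (q powr w / q) \<le> w * (0.6 - q) * 1"
      by (rule mult_left_mono_neg)
    thus ?thesis by simp
  qed
  finally have m: "(0.6::real) powr w \<le> q powr w + w * (0.6 - q)" .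
  have e6: "(0.6::real) powr w = exp (w * ln 0.6)" by (simp add: powr_def mult.commute)
  have "exp (ln 0.783) * (1 + (w * ln 0.6 - ln 0.783)) \<le> exp (w * ln (0.6::real))"
    by (rule tangent_exp)
  hence t: "0.783 * (1 + (w * ln 0.6 - ln 0.783)) \<le> exp (w * ln (0.6::real))" by simp
  have "w * ln 0.6 \<ge> w * (-0.51084::real)" using mult_left_mono[OF ln06 assms(1)] by simp
  hence "0.783 * (1 + (w * (-0.51084) + 0.2446)) \<le> 0.783 * (1 + (w * ln 0.6 - ln (0.783::real)))"
    using lnr by (intro mult_left_mono) (linarith, simp)
  hence "0.783 * (1 + (w * (-0.51084) + 0.2446)) \<le> (0.6::real) powr w"
    using t e6 by linarith
  hence "1 - w * p - q powr w < 0.0255" using m assms by (simp add: q_def algebra_simps)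
  thus "lik_dist w 0 p < 0.0255" using eq by (simp add: q_def)
qed

theorem theorem1:
  fixes w \<delta> p :: real
  assumes "0 \<le> w" "w \<le> 1" "\<delta> \<in> {0, 1}" "0 < p" "p < 1"
  shows "lik_dist w \<delta> p \<le> (1 - beta_star p * p) - (1 - p) powr (beta_star p)
     \<and> (p \<le> 0.4 \<longrightarrow> lik_dist w \<delta> p < 0.0255)"
proof (cases "\<delta> = 0")
  case True
  thus ?thesis using main0[OF assms(1,2,4,5)] by simp
next
  case False
  hence d: "\<delta> = 1" using assms(3) by simp
  have b: "0 < 1 - w * p" using assms
    by (smt (verit) mult_left_le_one_le mult_nonneg_nonneg)
  have "lik_dist w \<delta> p = 0" using b assms(5) unfolding lik_dist_def lik_def lik_approx_def d by simp
  moreover have "lik_dist 0 0 p \<le> (1 - beta_star p * p) - (1 - p) powr (beta_star p)"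
    using main0(2)[of 0 p] assms by simp
  moreover have "lik_dist 0 0 p = 0" using main0(1)[of 0 p] assms by simp
  ultimately show ?thesis by simp
qed

end
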